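(* The assignment $S\mapsto \mathbf{H}(S)$ on objects and $\varphi\mapsto\mathbf{H}(\varphi)$ (restriction of $\varphi$ to $S$) on morphisms is a functor from the category of finite association schemes with admissible morphisms to the category of finite hypergroups with hypergroup homomorphisms.
   Context: For a nonempty set $X$: $1_X=\{(x,x):x\in X\}$; for $p\subseteq X\times X$, $p^*=\{(a,b):(b,a)\in p\}$ and $xp=\{y\in X:(x,y)\in p\}$. An association scheme on $X$ is a partition $S$ of $X\times X$ with $1_X\in S$, $p^*\in S$ whenever $p\in S$, and such that for all $p,q,r\in S$ there is a cardinal $a_{pq}^r$ with $|yp\cap zq^*|=a_{pq}^r$ for all $y\in X$, $z\in yr$; it is finite if $X$ is finite. Complex multiplication: $pq=\{r\in S:a_{pq}^r\ge1\}$. $\mathbf{H}(S)$ is the hypergroup on $S$ with hyperoperation complex multiplication, identity $1_X$, inverse $p^*$. A hypergroup is a nonempty set $H$ with $*:H\times H\to P^*(H)$ (nonempty subsets), extended to subsets by unions, that is associative, has a unique identity $e$ ($e*x=x*e=\{x\}$), unique inverses $f^{-1}$ with $e\in(f^{-1}*f)\cap(f*f^{-1})$, and satisfies reversibility ($c\in a*b\Rightarrow a\in c*b^{-1}$ and $b\in a^{-1}*c$). A hypergroup homomorphism $f$ satisfies $f(a*b)\subseteq f(a)*f(b)$. A morphism of association schemes $S$ on $X$ to $T$ on $Y$ is $f:X\cup S\to Y\cup T$ with $f(X)\subseteq Y$, $f(S)\subseteq T$, and $(f(x),f(y))\in f(p)$ for all $(x,y)\in p\in S$; it is admissible if whenever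 $(f(x),y)\in f(p)$ ($x\in X,y\in Y,p\in S$) there is $z\in X$ with $(x,z)\in p$ and $f(z)=y$. *)

theory Defs
  imports Main
begin

definition row :: "'a set \<Rightarrow> ('a \<times> 'a) set \<Rightarrow> 'a \<Rightarrow> 'a set" where
  "row X p x = {y \<in> X. (x, y) \<in> p}"

definition finite_assoc_scheme :: "'a set \<Rightarrow> ('a \<times> 'a) set set \<Rightarrow> bool" where
  "finite_assoc_scheme X S \<longleftrightarrow>
     finite X \<and> X \<noteq> {} \<and>
     (\<forall>p\<in>S. p \<noteq> {}) \<and>
     (\<forall>p\<in>S. \<forall>q\<in>S. p \<noteq> q \<longrightarrow> p \<inter> q = {}) \<and>
     \<Union>S = X \<times> X \<and>
     Id_on X \<in> S \<and>
     (\<forall>p\<in>S. converse p \<in> S) \<and>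
     (\<forall>p\<in>S. \<forall>q\<in>S. \<forall>r\<in>S. \<exists>n::nat. \<forall>y\<in>X. \<forall>z\<in>row X r y.
          card (row X p y \<inter> row X (converse q) z) = n)"

definition isect_num :: "'a set \<Rightarrow> ('a \<times> 'a) set \<Rightarrow> ('a \<times> 'a) set \<Rightarrow> ('a \<times> 'a) set \<Rightarrow> nat" where
  "isect_num X p q r = (SOME n. \<forall>y\<in>X. \<forall>z\<in>row X r y.
          card (row X p y \<inter> row X (converse q) z) = n)"

definition cmult :: "'a set \<Rightarrow> ('a \<times> 'a) set set \<Rightarrow> ('a \<times> 'a) set \<Rightarrow> ('a \<times> 'a) set \<Rightarrow> ('a \<times> 'a) set set" where
  "cmult X S p q = {r \<in> S. isect_num X p q r \<ge> 1}"

definition hset :: "('h \<Rightarrow> 'h \<Rightarrow> 'h set) \<Rightarrow> 'h set \<Rightarrow> 'h set \<Rightarrow> 'h set" where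
  "hset m A B = (\<Union>a\<in>A. \<Union>b\<in>B. m a b)"

definition hypergroup :: "'h set \<Rightarrow> ('h \<Rightarrow> 'h \<Rightarrow> 'h set) \<Rightarrow> 'h \<Rightarrow> ('h \<Rightarrow> 'h) \<Rightarrow> bool" where
  "hypergroup H m e iv \<longleftrightarrow>
     H \<noteq> {} \<and>
     (\<forall>a\<in>H. \<forall>b\<in>H. m a b \<subseteq> H \<and> m a b \<noteq> {}) \<and>
     (\<forall>a\<in>H. \<forall>b\<in>H. \<forall>c\<in>H. hset m (m a b) {c} = hset m {a} (m b c)) \<and>
     e \<in> H \<and> (\<forall>x\<in>H. m e x = {x} \<and> m x e = {x}) \<and>
     (\<forall>e'\<in>H. (\<forall>x\<in>H. m e' x = {x} \<and> m x e' = {x}) \<longrightarrow> e' = e) \<and>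
     (\<forall>f\<in>H. iv f \<in> H \<and> e \<in> m (iv f) f \<inter> m f (iv f) \<and>
        (\<forall>g\<in>H. e \<in> m g f \<inter> m f g \<longrightarrow> g = iv f)) \<and>
     (\<forall>a\<in>H. \<forall>b\<in>H. \<forall>c\<in>H. c \<in> m a b \<longrightarrow> a \<in> m c (iv b) \<and> b \<in> m (iv a) c)"

definition hypergroup_hom :: "'h set \<Rightarrow> ('h \<Rightarrow> 'h \<Rightarrow> 'h set) \<Rightarrow> 'k set \<Rightarrow> ('k \<Rightarrow> 'k \<Rightarrow> 'k set) \<Rightarrow> ('h \<Rightarrow> 'k) \<Rightarrow> bool" where
  "hypergroup_hom H m H' m' f \<longleftrightarrow>
     f ` H \<subseteq> H' \<and> (\<forall>a\<in>H. \<forall>b\<in>H. f ` (m a b) \<subseteq> m' (f a) (f b))"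

definition scheme_hypergroup :: "'a set \<Rightarrow> ('a \<times> 'a) set set \<Rightarrow> bool" where
  "scheme_hypergroup X S \<longleftrightarrow> hypergroup S (cmult X S) (Id_on X) converse"

text \<open>A morphism f : X \<union> S \<rightarrow> Y \<union> T is given by its two components fX (on points) and fS (on relations).\<close>
definition scheme_morphism :: "'a set \<Rightarrow> ('a \<times> 'a) set set \<Rightarrow> 'b set \<Rightarrow> ('b \<times> 'b) set set
    \<Rightarrow> ('a \<Rightarrow> 'b) \<Rightarrow> (('a \<times> 'a) set \<Rightarrow> ('b \<times> 'b) set) \<Rightarrow> bool" where
  "scheme_morphism X S Y T fX fS \<longleftrightarrow>
     fX ` X \<subseteq> Y \<and> fS ` S \<subseteq> T \<and>
     (\<forall>p\<in>S. \<forall>x y. (x, y) \<in> p \<longrightarrow> (fX x, fX y) \<in> fS p)"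

definition admissible_morphism :: "'a set \<Rightarrow> ('a \<times> 'a) set set \<Rightarrow> 'b set \<Rightarrow> ('b \<times> 'b) set set
    \<Rightarrow> ('a \<Rightarrow> 'b) \<Rightarrow> (('a \<times> 'a) set \<Rightarrow> ('b \<times> 'b) set) \<Rightarrow> bool" where
  "admissible_morphism X S Y T fX fS \<longleftrightarrow>
     scheme_morphism X S Y T fX fS \<and>
     (\<forall>x\<in>X. \<forall>y\<in>Y. \<forall>p\<in>S. (fX x, y) \<in> fS p \<longrightarrow> (\<exists>z\<in>X. (x, z) \<in> p \<and> fX z = y))"

end

theory Submission
  imports Defs
begin

lemma fas_sub: "finite_assoc_scheme X S \<Longrightarrow> p \<in> S \<Longrightarrow> p \<subseteq> X \<times> X"
  unfolding finite_assoc_scheme_def by blast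

lemma fas_disj: "finite_assoc_scheme X S \<Longrightarrow> p \<in> S \<Longrightarrow> q \<in> S \<Longrightarrow> (a,b) \<in> p \<Longrightarrow> (a,b) \<in> q \<Longrightarrow> p = q"
  unfolding finite_assoc_scheme_def by blast

lemma fas_cover: "finite_assoc_scheme X S \<Longrightarrow> a \<in> X \<Longrightarrow> b \<in> X \<Longrightarrow> \<exists>r\<in>S. (a,b) \<in> r"
  unfolding finite_assoc_scheme_def by blast

lemma cmult_iff:
  assumes SX: "finite_assoc_scheme X S" and p: "p \<in> S" and q: "q \<in> S"
  shows "cmult X S p q = {r\<in>S. r \<inter> (p O q) \<noteq> {}}"
proof -
  have "isect_num X p q r \<ge> 1 \<longleftrightarrow> r \<inter> (p O q) \<noteq> {}" if r: "r \<in> S" for r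
  proof -
    from SX p q r obtain n :: nat where n: "\<forall>y\<in>X. \<forall>z\<in>row X r y.
          card (row X p y \<inter> row X (converse q) z) = n"
      unfolding finite_assoc_scheme_def by blast
    have rs: "r \<subseteq> X \<times> X" using fas_sub[OF SX r] .
    have ps: "p \<subseteq> X \<times> X" using fas_sub[OF SX p] .
    from SX r obtain y0 z0 where yz0: "(y0,z0) \<in> r" unfolding finite_assoc_scheme_def by fast
    have key: "card (row X p y \<inter> row X (converse q) z) = n" if "(y,z) \<in> r" for y z
      using n that rs unfolding row_def by blast
    have isn: "isect_num X p q r = n"
    proof -
      have "\<exists>m. \<forall>y\<in>X. \<forall>z\<in>row X r y. card (row X p y \<inter> row X (converse q) z) = m"
        using n by blast
      then have "\<forall>y\<in>X. \<forall>z\<in>row X r y. card (row X p y \<inter> row X (converse q) z) = isect_num X p q r"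
        unfolding isect_num_def by (rule someI_ex)
      then have "card (row X p y0 \<inter> row X (converse q) z0) = isect_num X p q r"
        using yz0 rs unfolding row_def by blast
      then show ?thesis using key[OF yz0] by simp
    qed
    have fin: "finite (row X p y \<inter> row X (converse q) z)" for y z
      using SX unfolding finite_assoc_scheme_def row_def by auto
    have eqs: "row X p y \<inter> row X (converse q) z = {w. (y,w) \<in> p \<and> (w,z) \<in> q}" for y z
      using ps unfolding row_def by blast
    have pw: "n \<ge> 1 \<longleftrightarrow> (\<exists>w. (y,w) \<in> p \<and> (w,z) \<in> q)" if "(y,z) \<in> r" for y z
    proof -
      have "n \<ge> 1 \<longleftrightarrow> row X p y \<inter> row X (converse q) z \<noteq> {}"
        using key[OF that] fin[of y z] by (metis One_nat_def card_0_eq less_one not_le)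
      then show ?thesis using eqs by auto
    qed
    show ?thesis
    proof
      assume "1 \<le> isect_num X p q r"
      then show "r \<inter> (p O q) \<noteq> {}" using pw[OF yz0] isn yz0 by blast
    next
      assume "r \<inter> (p O q) \<noteq> {}"
      then obtain y z where "(y,z) \<in> r" "(y,z) \<in> p O q" by auto
      then show "1 \<le> isect_num X p q r" using pw isn by blast
    qed
  qed
  then show ?thesis unfolding cmult_def by auto
qed

lemma meet_sub:
  assumes SX: "finite_assoc_scheme X S" and p: "p \<in> S" and q: "q \<in> S" and r: "r \<in> S"
    and m: "r \<inter> (p O q) \<noteq> {}"
  shows "r \<subseteq> p O q"
proof -
  from SX p q r obtain n :: nat where n: "\<forall>y\<in>X. \<forall>z\<in>row X r y.
        card (row X p y \<inter> row X (converse q) z) = n"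
    unfolding finite_assoc_scheme_def by blast
  have rs: "r \<subseteq> X \<times> X" using fas_sub[OF SX r] .
  have ps: "p \<subseteq> X \<times> X" using fas_sub[OF SX p] .
  have key: "card (row X p y \<inter> row X (converse q) z) = n" if "(y,z) \<in> r" for y z
    using n that rs unfolding row_def by blast
  have fin: "finite (row X p y \<inter> row X (converse q) z)" for y z
    using SX unfolding finite_assoc_scheme_def row_def by auto
  have eqs: "row X p y \<inter> row X (converse q) z = {w. (y,w) \<in> p \<and> (w,z) \<in> q}" for y z
    using ps unfolding row_def by blast
  have pw: "n \<ge> 1 \<longleftrightarrow> (\<exists>w. (y,w) \<in> p \<and> (w,z) \<in> q)" if "(y,z) \<in> r" for y z
  proof -
    have "n \<ge> 1 \<longleftrightarrow> row X p y \<inter> row X (converse q) z \<noteq> {}"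
      using key[OF that] fin[of y z] by (metis One_nat_def card_0_eq less_one not_le)
    then show ?thesis using eqs by auto
  qed
  from m obtain y z where "(y,z) \<in> r" "(y,z) \<in> p O q" by auto
  then have "n \<ge> 1" using pw by blast
  then show ?thesis using pw by auto
qed

lemma union_cmult:
  assumes SX: "finite_assoc_scheme X S" and p: "p \<in> S" and q: "q \<in> S"
  shows "\<Union>(cmult X S p q) = p O q"
proof
  show "\<Union>(cmult X S p q) \<subseteq> p O q"
  proof
    fix a assume "a \<in> \<Union>(cmult X S p q)"
    then obtain r where r: "r \<in> S" "r \<inter> (p O q) \<noteq> {}" "a \<in> r" using cmult_iff[OF assms] by auto
    then show "a \<in> p O q" using meet_sub[OF assms] by blast
  qed
next
  show "p O q \<subseteq> \<Union>(cmult X S p q)"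
  proof
    fix a assume a: "a \<in> p O q"
    obtain y z where "a = (y,z)" by (cases a)
    moreover have "y \<in> X" "z \<in> X" using a calculation fas_sub[OF SX p] fas_sub[OF SX q] by auto
    ultimately obtain r where "r \<in> S" "a \<in> r" using fas_cover[OF SX] by blast
    then show "a \<in> \<Union>(cmult X S p q)" using a cmult_iff[OF assms] by auto
  qed
qed

lemma hset_left:
  assumes SX: "finite_assoc_scheme X S" and a: "a \<in> S" and b: "b \<in> S" and c: "c \<in> S"
  shows "hset (cmult X S) (cmult X S a b) {c} = {s\<in>S. s \<inter> ((a O b) O c) \<noteq> {}}"
proof -
  have sub: "cmult X S a b \<subseteq> S" unfolding cmult_def by auto
  have "hset (cmult X S) (cmult X S a b) {c} = {s\<in>S. \<exists>r\<in>cmult X S a b. s \<inter> (r O c) \<noteq> {}}"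
  proof (rule set_eqI)
    fix s
    have "s \<in> hset (cmult X S) (cmult X S a b) {c} \<longleftrightarrow> (\<exists>r\<in>cmult X S a b. s \<in> cmult X S r c)"
      unfolding hset_def by blast
    also have "\<dots> \<longleftrightarrow> (\<exists>r\<in>cmult X S a b. s \<in> S \<and> s \<inter> (r O c) \<noteq> {})"
    proof -
      have eq: "\<And>r. r \<in> cmult X S a b \<Longrightarrow> cmult X S r c = {t\<in>S. t \<inter> (r O c) \<noteq> {}}"
        using cmult_iff[OF SX _ c] sub by blast
      show ?thesis using eq by auto
    qed
    finally show "s \<in> hset (cmult X S) (cmult X S a b) {c} \<longleftrightarrow> s \<in> {s\<in>S. \<exists>r\<in>cmult X S a b. s \<inter> (r O c) \<noteq> {}}"
      by blast
  qed
  also have "\<dots> = {s\<in>S. s \<inter> ((\<Union>(cmult X S a b)) O c) \<noteq> {}}" by blast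
  finally show ?thesis using union_cmult[OF SX a b] by simp
qed

lemma hset_right:
  assumes SX: "finite_assoc_scheme X S" and a: "a \<in> S" and b: "b \<in> S" and c: "c \<in> S"
  shows "hset (cmult X S) {a} (cmult X S b c) = {s\<in>S. s \<inter> (a O (b O c)) \<noteq> {}}"
proof -
  have sub: "cmult X S b c \<subseteq> S" unfolding cmult_def by auto
  have "hset (cmult X S) {a} (cmult X S b c) = {s\<in>S. \<exists>r\<in>cmult X S b c. s \<inter> (a O r) \<noteq> {}}"
  proof (rule set_eqI)
    fix s
    have "s \<in> hset (cmult X S) {a} (cmult X S b c) \<longleftrightarrow> (\<exists>r\<in>cmult X S b c. s \<in> cmult X S a r)"
      unfolding hset_def by blast
    also have "\<dots> \<longleftrightarrow> (\<exists>r\<in>cmult X S b c. s \<in> S \<and> s \<inter> (a O r) \<noteq> {})"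
    proof -
      have eq: "\<And>r. r \<in> cmult X S b c \<Longrightarrow> cmult X S a r = {t\<in>S. t \<inter> (a O r) \<noteq> {}}"
        using cmult_iff[OF SX a] sub by blast
      show ?thesis using eq by auto
    qed
    finally show "s \<in> hset (cmult X S) {a} (cmult X S b c) \<longleftrightarrow> s \<in> {s\<in>S. \<exists>r\<in>cmult X S b c. s \<inter> (a O r) \<noteq> {}}"
      by blast
  qed
  also have "\<dots> = {s\<in>S. s \<inter> (a O (\<Union>(cmult X S b c))) \<noteq> {}}" by blast
  finally show ?thesis using union_cmult[OF SX b c] by simp
qed

lemma valency:
  assumes SX: "finite_assoc_scheme X S" and b: "b \<in> S" and y: "y \<in> X"
  shows "\<exists>z. (y,z) \<in> b"
proof -
  have I: "Id_on X \<in> S" and cb: "converse b \<in> S" using SX b unfolding finite_assoc_scheme_def by auto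
  from SX b cb I obtain n :: nat where n: "\<forall>y\<in>X. \<forall>z\<in>row X (Id_on X) y.
        card (row X b y \<inter> row X (converse (converse b)) z) = n"
    unfolding finite_assoc_scheme_def by blast
  have k: "card (row X b y) = n" if yX: "y \<in> X" for y
  proof -
    have "y \<in> row X (Id_on X) y" using yX unfolding row_def by auto
    then have "card (row X b y \<inter> row X (converse (converse b)) y) = n" using n yX by blast
    then show ?thesis by simp
  qed
  have fin: "finite (row X b y)" for y using SX unfolding finite_assoc_scheme_def row_def by auto
  from SX b obtain u v where uv: "(u,v) \<in> b" unfolding finite_assoc_scheme_def by fast
  have "u \<in> X" "v \<in> X" using uv fas_sub[OF SX b] by auto
  then have "row X b u \<noteq> {}" using uv unfolding row_def by auto
  then have "n \<noteq> 0" using k[OF \<open>u \<in> X\<close>] fin by auto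
  then have "row X b y \<noteq> {}" using k[OF y] by auto
  then show ?thesis unfolding row_def by auto
qed

theorem corollary3p2:
  fixes X :: "'a set" and S :: "('a \<times> 'a) set set"
    and Y :: "'b set" and T :: "('b \<times> 'b) set set"
    and Z :: "'c set" and U :: "('c \<times> 'c) set set"
    and fX :: "'a \<Rightarrow> 'b" and fS :: "('a \<times> 'a) set \<Rightarrow> ('b \<times> 'b) set"
    and gX :: "'b \<Rightarrow> 'c" and gS :: "('b \<times> 'b) set \<Rightarrow> ('c \<times> 'c) set"
  assumes SX: "finite_assoc_scheme X S"
    and TY: "finite_assoc_scheme Y T"
    and UZ: "finite_assoc_scheme Z U"
    and f: "admissible_morphism X S Y T fX fS"
    and g: "admissible_morphism Y T Z U gX gS"
  shows
    \<comment> \<open>object part: H(S) is a finite hypergroup\<close>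
    "(finite S \<and> scheme_hypergroup X S)
     \<comment> \<open>morphism part: H(f) = restriction of f to S is a hypergroup homomorphism\<close>
     \<and> hypergroup_hom S (cmult X S) T (cmult Y T) fS
     \<comment> \<open>source category: identities and composites are admissible morphisms\<close>
     \<and> admissible_morphism X S X S id id
     \<and> admissible_morphism X S Z U (gX \<circ> fX) (gS \<circ> fS)
     \<comment> \<open>functor laws on the restrictions to S\<close>
     \<and> (\<forall>p\<in>S. id p = p)
     \<and> (\<forall>p\<in>S. (gS \<circ> fS) p = gS (fS p))"
proof -
  have I: "Id_on X \<in> S" and cv: "\<And>p. p \<in> S \<Longrightarrow> converse p \<in> S" and ne: "\<And>p. p \<in> S \<Longrightarrow> p \<noteq> {}"
    and Xne: "X \<noteq> {}" and fX: "finite X"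
    using SX unfolding finite_assoc_scheme_def by auto
  note sub = fas_sub[OF SX] and disj = fas_disj[OF SX] and ci = cmult_iff[OF SX]
  have finS: "finite S"
  proof -
    have "S \<subseteq> Pow (X \<times> X)" using sub by auto
    then show ?thesis using fX finite_subset by blast
  qed
  have one: "{s\<in>S. s \<inter> x \<noteq> {}} = {x}" if "x \<in> S" for x
  proof (rule set_eqI, rule iffI)
    fix s assume "s \<in> {s\<in>S. s \<inter> x \<noteq> {}}"
    then obtain a b where "s \<in> S" "(a,b) \<in> s" "(a,b) \<in> x" by auto
    then show "s \<in> {x}" using disj[OF _ that] by blast
  next
    fix s assume "s \<in> {x}" then show "s \<in> {s\<in>S. s \<inter> x \<noteq> {}}" using that ne by auto
  qed
  have idl: "cmult X S (Id_on X) x = {x}" if "x \<in> S" for x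
  proof -
    have "Id_on X O x = x" using sub[OF that] by auto
    then show ?thesis using ci[OF I that] one[OF that] by simp
  qed
  have idr: "cmult X S x (Id_on X) = {x}" if "x \<in> S" for x
  proof -
    have "x O Id_on X = x" using sub[OF that] by auto
    then show ?thesis using ci[OF that I] one[OF that] by simp
  qed
  have hg: "scheme_hypergroup X S"
    unfolding scheme_hypergroup_def hypergroup_def
  proof (intro conjI ballI impI)
    show "S \<noteq> {}" using I by auto
  next
    fix a b assume a: "a \<in> S" and b: "b \<in> S"
    show "cmult X S a b \<subseteq> S" unfolding cmult_def by auto
    obtain x y where xy: "(x,y) \<in> a" using ne[OF a] by fast
    have "y \<in> X" using xy sub[OF a] by auto
    then obtain z where "(y,z) \<in> b" using valency[OF SX b] by blast
    then have "(x,z) \<in> a O b" using xy by blast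
    moreover have "x \<in> X" "z \<in> X" using xy \<open>(y,z) \<in> b\<close> sub[OF a] sub[OF b] by auto
    ultimately obtain r where "r \<in> S" "(x,z) \<in> r" "(x,z) \<in> a O b" using fas_cover[OF SX] by blast
    then have "r \<in> cmult X S a b" unfolding ci[OF a b] by blast
    then show "cmult X S a b \<noteq> {}" by blast
  next
    fix a b c assume a: "a \<in> S" and b: "b \<in> S" and c: "c \<in> S"
    show "hset (cmult X S) (cmult X S a b) {c} = hset (cmult X S) {a} (cmult X S b c)"
      using hset_left[OF SX a b c] hset_right[OF SX a b c] by (simp add: O_assoc)
  next
    show "Id_on X \<in> S" by (rule I)
  next
    fix x assume "x \<in> S"
    then show "cmult X S (Id_on X) x = {x}" using idl by simp
    show "cmult X S x (Id_on X) = {x}" using idr \<open>x \<in> S\<close> by simp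
  next
    fix e' assume e': "e' \<in> S" and h: "\<forall>x\<in>S. cmult X S e' x = {x} \<and> cmult X S x e' = {x}"
    then have "cmult X S (Id_on X) e' = {Id_on X}" using I by simp
    then show "e' = Id_on X" using idl[OF e'] by simp
  next
    fix p assume p: "p \<in> S"
    show "converse p \<in> S" using cv[OF p] .
    obtain x y where xy: "(x,y) \<in> p" using ne[OF p] by fast
    have "x \<in> X" "y \<in> X" using xy sub[OF p] by auto
    then have "(y,y) \<in> Id_on X \<inter> (converse p O p)" "(x,x) \<in> Id_on X \<inter> (p O converse p)"
      using xy by auto
    then show "Id_on X \<in> cmult X S (converse p) p \<inter> cmult X S p (converse p)"
      unfolding ci[OF cv[OF p] p] ci[OF p cv[OF p]] using I by blast
  next
    fix p g assume p: "p \<in> S" and gS: "g \<in> S"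
      and h: "Id_on X \<in> cmult X S g p \<inter> cmult X S p g"
    then have "Id_on X \<inter> (g O p) \<noteq> {}" using ci[OF gS p] by auto
    then obtain x w where "(x,w) \<in> g" "(w,x) \<in> p" by auto
    then show "g = converse p" using disj[OF gS cv[OF p]] by blast
  next
    fix a b c assume a: "a \<in> S" and b: "b \<in> S" and c: "c \<in> S" and cm: "c \<in> cmult X S a b"
    then have "c \<inter> (a O b) \<noteq> {}" unfolding ci[OF a b] by blast
    then obtain y z w where yz: "(y,z) \<in> c" "(y,w) \<in> a" "(w,z) \<in> b" by blast
    have "(y,w) \<in> a \<inter> (c O converse b)" "(w,z) \<in> b \<inter> (converse a O c)" using yz by auto
    then show "a \<in> cmult X S c (converse b)" "b \<in> cmult X S (converse a) c"
      unfolding ci[OF c cv[OF b]] ci[OF cv[OF a] c] using a b by blast+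
  qed
  have fm: "fX ` X \<subseteq> Y" "fS ` S \<subseteq> T" "\<And>p x y. p \<in> S \<Longrightarrow> (x, y) \<in> p \<Longrightarrow> (fX x, fX y) \<in> fS p"
    and fa: "\<And>x y p. x \<in> X \<Longrightarrow> y \<in> Y \<Longrightarrow> p \<in> S \<Longrightarrow> (fX x, y) \<in> fS p \<Longrightarrow> (\<exists>z\<in>X. (x, z) \<in> p \<and> fX z = y)"
  proof -
    have sm: "scheme_morphism X S Y T fX fS" and adm: "\<forall>x\<in>X. \<forall>y\<in>Y. \<forall>p\<in>S. (fX x, y) \<in> fS p \<longrightarrow> (\<exists>z\<in>X. (x, z) \<in> p \<and> fX z = y)"
      using f unfolding admissible_morphism_def by auto
    show "fX ` X \<subseteq> Y" using sm unfolding scheme_morphism_def by auto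
    show "fS ` S \<subseteq> T" using sm unfolding scheme_morphism_def by auto
    show "\<And>p x y. p \<in> S \<Longrightarrow> (x, y) \<in> p \<Longrightarrow> (fX x, fX y) \<in> fS p" using sm unfolding scheme_morphism_def by auto
    show "\<And>x y p. x \<in> X \<Longrightarrow> y \<in> Y \<Longrightarrow> p \<in> S \<Longrightarrow> (fX x, y) \<in> fS p \<Longrightarrow> (\<exists>z\<in>X. (x, z) \<in> p \<and> fX z = y)"
      using adm by blast
  qed
  have gm: "gX ` Y \<subseteq> Z" "gS ` T \<subseteq> U" "\<And>p x y. p \<in> T \<Longrightarrow> (x, y) \<in> p \<Longrightarrow> (gX x, gX y) \<in> gS p"
    and ga: "\<And>x y p. x \<in> Y \<Longrightarrow> y \<in> Z \<Longrightarrow> p \<in> T \<Longrightarrow> (gX x, y) \<in> gS p \<Longrightarrow> (\<exists>z\<in>Y. (x, z) \<in> p \<and> gX z = y)"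
  proof -
    have sm: "scheme_morphism Y T Z U gX gS" and adm: "\<forall>x\<in>Y. \<forall>y\<in>Z. \<forall>p\<in>T. (gX x, y) \<in> gS p \<longrightarrow> (\<exists>z\<in>Y. (x, z) \<in> p \<and> gX z = y)"
      using g unfolding admissible_morphism_def by auto
    show "gX ` Y \<subseteq> Z" using sm unfolding scheme_morphism_def by auto
    show "gS ` T \<subseteq> U" using sm unfolding scheme_morphism_def by auto
    show "\<And>p x y. p \<in> T \<Longrightarrow> (x, y) \<in> p \<Longrightarrow> (gX x, gX y) \<in> gS p" using sm unfolding scheme_morphism_def by auto
    show "\<And>x y p. x \<in> Y \<Longrightarrow> y \<in> Z \<Longrightarrow> p \<in> T \<Longrightarrow> (gX x, y) \<in> gS p \<Longrightarrow> (\<exists>z\<in>Y. (x, z) \<in> p \<and> gX z = y)"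
      using adm by blast
  qed
  have hom: "hypergroup_hom S (cmult X S) T (cmult Y T) fS"
    unfolding hypergroup_hom_def
  proof (intro conjI ballI)
    show "fS ` S \<subseteq> T" by (rule fm(2))
  next
    fix a b assume a: "a \<in> S" and b: "b \<in> S"
    show "fS ` cmult X S a b \<subseteq> cmult Y T (fS a) (fS b)"
    proof
    fix r' assume r': "r' \<in> fS ` cmult X S a b"
    then obtain r where r: "r \<in> cmult X S a b" "r' = fS r" by auto
    then have rS: "r \<in> S" unfolding cmult_def by auto
    from r have "r \<inter> (a O b) \<noteq> {}" unfolding ci[OF a b] by blast
    then obtain y z w where yz: "(y,z) \<in> r" "(y,w) \<in> a" "(w,z) \<in> b" by blast
    have "(fX y, fX z) \<in> fS r" "(fX y, fX w) \<in> fS a" "(fX w, fX z) \<in> fS b" using yz fm(3) rS a b by auto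
    then have "(fX y, fX z) \<in> fS r \<inter> (fS a O fS b)" by blast
    moreover have "fS r \<in> T" "fS a \<in> T" "fS b \<in> T" using fm(2) rS a b by auto
    ultimately show "r' \<in> cmult Y T (fS a) (fS b)" unfolding cmult_iff[OF TY \<open>fS a \<in> T\<close> \<open>fS b \<in> T\<close>] using r(2) by blast
  qed
  qed
  have idm: "admissible_morphism X S X S id id"
    unfolding admissible_morphism_def scheme_morphism_def by auto
  have comp: "admissible_morphism X S Z U (gX \<circ> fX) (gS \<circ> fS)"
    unfolding admissible_morphism_def scheme_morphism_def
  proof (intro conjI ballI allI impI)
    show "(gX \<circ> fX) ` X \<subseteq> Z" using fm(1) gm(1) by auto
    show "(gS \<circ> fS) ` S \<subseteq> U" using fm(2) gm(2) by auto
  next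
    fix p x y assume "p \<in> S" "(x,y) \<in> p"
    then show "((gX \<circ> fX) x, (gX \<circ> fX) y) \<in> (gS \<circ> fS) p" using fm gm by auto
  next
    fix x y p assume x: "x \<in> X" and y: "y \<in> Z" and p: "p \<in> S" and h: "((gX \<circ> fX) x, y) \<in> (gS \<circ> fS) p"
    have "fX x \<in> Y" "fS p \<in> T" using fm x p by auto
    then obtain z' where z': "z' \<in> Y" "(fX x, z') \<in> fS p" "gX z' = y" using ga[of "fX x" y "fS p"] y h by auto
    then obtain z where "z \<in> X" "(x,z) \<in> p" "fX z = z'" using fa x p by blast
    then show "\<exists>z\<in>X. (x, z) \<in> p \<and> (gX \<circ> fX) z = y" using z' by auto
  qed
  show ?thesis using finS hg hom idm comp by simp
qed

end
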